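(* Let $G$ be an extraspecial or almost extraspecial $2$-group of order $2^n$, $n\geq 3$. Then $e_2(G)\leq e_2(D_8\times C_2^{n-3})$.
   Context: A finite $2$-group $G$ is extraspecial if $Z(G)=G'=\Phi(G)$ has order $2$, and almost extraspecial if $G'=\Phi(G)$ has order $2$ and $Z(G)\cong C_4$. For a finite $2$-group $H$ and $i\ge 2$, $e_i(H)$ denotes the number of elementary abelian subgroups of $H$ of order $2^i$ containing the Frattini subgroup $\Phi(H)$. $D_8$ is the dihedral group of order $8$, $C_2^m$ the elementary abelian group of order $2^m$. *)

theory Defs
  imports "HOL-Algebra.Algebra"
begin

definition group_center :: "('a, 'b) monoid_scheme \<Rightarrow> 'a set" where
  "group_center G = {z \<in> carrier G. \<forall>g \<in> carrier G. z \<otimes>\<^bsub>G\<^esub> g = g \<otimes>\<^bsub>G\<^esub> z}"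

definition maximal_subgroup :: "'a set \<Rightarrow> ('a, 'b) monoid_scheme \<Rightarrow> bool" where
  "maximal_subgroup M G \<longleftrightarrow> subgroup M G \<and> M \<noteq> carrier G \<and>
     (\<forall>K. subgroup K G \<and> M \<subseteq> K \<longrightarrow> K = M \<or> K = carrier G)"

definition frattini :: "('a, 'b) monoid_scheme \<Rightarrow> 'a set" where
  "frattini G = carrier G \<inter> \<Inter>{M. maximal_subgroup M G}"

definition elementary_abelian_subgroup :: "'a set \<Rightarrow> ('a, 'b) monoid_scheme \<Rightarrow> bool" where
  "elementary_abelian_subgroup A G \<longleftrightarrow> subgroup A G \<and>
     (\<forall>x\<in>A. \<forall>y\<in>A. x \<otimes>\<^bsub>G\<^esub> y = y \<otimes>\<^bsub>G\<^esub> x) \<and>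
     (\<forall>x\<in>A. x [^]\<^bsub>G\<^esub> (2::nat) = \<one>\<^bsub>G\<^esub>)"

definition e_num :: "nat \<Rightarrow> ('a, 'b) monoid_scheme \<Rightarrow> nat" where
  "e_num i H = card {A. elementary_abelian_subgroup A H \<and> card A = 2 ^ i \<and> frattini H \<subseteq> A}"

definition extraspecial :: "('a, 'b) monoid_scheme \<Rightarrow> bool" where
  "extraspecial G \<longleftrightarrow> group_center G = derived G (carrier G) \<and>
     derived G (carrier G) = frattini G \<and> card (frattini G) = 2"

definition almost_extraspecial :: "('a, 'b) monoid_scheme \<Rightarrow> bool" where
  "almost_extraspecial G \<longleftrightarrow> derived G (carrier G) = frattini G \<and> card (frattini G) = 2 \<and>
     (G\<lparr>carrier := group_center G\<rparr>) \<cong> integer_mod_group 4"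

text \<open>Dihedral group of order 8: (a,b) represents r^a s^b, with s r s = r^-1.\<close>
definition D8 :: "(int \<times> bool) monoid" where
  "D8 = \<lparr>carrier = {0..<4} \<times> UNIV,
         monoid.mult = (\<lambda>(a, b) (c, d). ((a + (if b then - c else c)) mod 4, b \<noteq> d)),
         one = (0, False)\<rparr>"

definition C2pow :: "nat \<Rightarrow> (nat \<Rightarrow> int) monoid" where
  "C2pow m = product_group {..<m} (\<lambda>_. integer_mod_group 2)"

end

theory Submission
  imports Defs
begin


lemma (in group) big_subgroup:
  assumes fin: "finite (carrier G)" and H: "subgroup H G" and big: "order G < 2 * card H"
  shows "H = carrier G"
proof -
  have L: "card (rcosets H) * card H = order G" using lagrange[OF H] .
  have pos: "order G > 0" using fin by (simp add: order_gt_0_iff_finite)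
  have "card (rcosets H) < 2"
  proof (rule ccontr)
    assume "\<not> card (rcosets H) < 2"
    then have "2 * card H \<le> card (rcosets H) * card H" by simp
    then show False using L big by simp
  qed
  moreover have "card (rcosets H) \<noteq> 0" using L pos by (metis mult_is_0 not_less0 zero_less_iff_neq_zero)
  ultimately have "card (rcosets H) = 1" by simp
  then have "card H = card (carrier G)" using L by (simp add: order_def)
  then show ?thesis using card_subset_eq[OF fin subgroup.subset[OF H]] by simp
qed

definition centr :: "('a, 'b) monoid_scheme \<Rightarrow> 'a \<Rightarrow> 'a set" where
  "centr G x = {y \<in> carrier G. x \<otimes>\<^bsub>G\<^esub> y = y \<otimes>\<^bsub>G\<^esub> x}"

lemma (in group) centr_subgroup:
  assumes x: "x \<in> carrier G" shows "subgroup (centr G x) G"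
proof
  show "centr G x \<subseteq> carrier G" by (auto simp: centr_def)
  show "\<one> \<in> centr G x" using x by (simp add: centr_def)
  fix a b assume a: "a \<in> centr G x" and b: "b \<in> centr G x"
  then have ac: "a \<in> carrier G" "x \<otimes> a = a \<otimes> x" and bc: "b \<in> carrier G" "x \<otimes> b = b \<otimes> x"
    by (auto simp: centr_def)
  have "x \<otimes> (a \<otimes> b) = (x \<otimes> a) \<otimes> b" using ac(1) bc(1) x by (simp add: m_assoc)
  also have "\<dots> = (a \<otimes> x) \<otimes> b" using ac by simp
  also have "\<dots> = a \<otimes> (x \<otimes> b)" using ac(1) bc(1) x by (simp add: m_assoc)
  also have "\<dots> = a \<otimes> (b \<otimes> x)" using bc by simp
  also have "\<dots> = (a \<otimes> b) \<otimes> x" using ac(1) bc(1) x by (simp add: m_assoc)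
  finally show "a \<otimes> b \<in> centr G x" using ac bc by (simp add: centr_def)
  have "x \<otimes> inv a = inv a \<otimes> (a \<otimes> x) \<otimes> inv a" using ac(1) x by (simp add: m_assoc[symmetric])
  also have "\<dots> = inv a \<otimes> (x \<otimes> a) \<otimes> inv a" using ac by simp
  also have "\<dots> = inv a \<otimes> x" using ac(1) x by (simp add: m_assoc)
  finally show "inv a \<in> centr G x" using ac by (simp add: centr_def)
qed

lemma (in group) three_quarters:
  assumes fin: "finite (carrier G)"
    and nc: "\<not> (\<forall>x\<in>carrier G. \<forall>y\<in>carrier G. x \<otimes> y = y \<otimes> x)"
  shows "4 * card {x \<in> carrier G. x \<otimes> x = \<one>} \<le> 3 * order G"
proof (rule ccontr)
  define S where "S = {x \<in> carrier G. x \<otimes> x = \<one>}"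
  assume "\<not> 4 * card {x \<in> carrier G. x \<otimes> x = \<one>} \<le> 3 * order G"
  then have big: "3 * order G < 4 * card S" unfolding S_def by simp
  have SG: "S \<subseteq> carrier G" by (auto simp: S_def)
  have finS: "finite S" using fin SG finite_subset by blast
  have cardG: "order G = card (carrier G)" by (simp add: order_def)
  have central: "centr G x = carrier G" if x: "x \<in> S" for x
  proof (rule big_subgroup[OF fin centr_subgroup])
    show xc: "x \<in> carrier G" using x SG by auto
    define T where "T = (\<lambda>y. inv x \<otimes> y) ` S"
    have cT: "card T = card S"
      unfolding T_def by (rule card_image) (use SG xc in \<open>auto simp: inj_on_def subset_iff\<close>)
    have TG: "T \<subseteq> carrier G" using SG xc by (auto simp: T_def)
    have "card (S \<union> T) \<le> order G" using SG TG fin cardG by (simp add: card_mono)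
    moreover have "card (S \<union> T) + card (S \<inter> T) = card S + card T"
      using card_Un_Int[of S T] finS finite_subset[OF TG fin] by auto
    ultimately have "order G < 2 * card (S \<inter> T)" using big cT by linarith
    moreover have "S \<inter> T \<subseteq> centr G x"
    proof
      fix y assume y: "y \<in> S \<inter> T"
      then obtain s where s: "s \<in> S" "y = inv x \<otimes> s" by (auto simp: T_def)
      have yc: "y \<in> carrier G" using y SG by auto
      have sc: "s \<in> carrier G" using s SG by auto
      have xy: "x \<otimes> y = s" using s xc sc by (simp add: m_assoc[symmetric])
      have xx: "x \<otimes> x = \<one>" and yy: "y \<otimes> y = \<one>" and ss: "s \<otimes> s = \<one>"
        using x y s by (auto simp: S_def)
      have ix: "inv x = x" using xx xc by (simp add: inv_equality)
      have iy: "inv y = y" using yy yc by (simp add: inv_equality)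
      have "x \<otimes> y = inv (x \<otimes> y)" using ss xy sc by (simp add: inv_equality)
      also have "\<dots> = y \<otimes> x" using xc yc ix iy by (simp add: inv_mult_group)
      finally show "y \<in> centr G x" using yc by (simp add: centr_def)
    qed
    ultimately show "order G < 2 * card (centr G x)"
      using card_mono[OF finite_subset[OF _ fin]] by (smt (verit) centr_def mem_Collect_eq
          dual_order.strict_trans1 mult_le_mono2 subsetI)
  qed
  have "centr G g = carrier G" if g: "g \<in> carrier G" for g
  proof (rule big_subgroup[OF fin centr_subgroup[OF g]])
    have "S \<subseteq> centr G g"
    proof
      fix s assume s: "s \<in> S"
      then have "g \<in> centr G s" using central g by auto
      then show "s \<in> centr G g" using s SG g by (auto simp: centr_def)
    qed
    then have "card S \<le> card (centr G g)"
      by (rule card_mono[OF finite_subset[OF _ fin], rotated]) (auto simp: centr_def)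
    then show "order G < 2 * card (centr G g)" using big by linarith
  qed
  then show False using nc by (auto simp: centr_def)
qed

lemma (in group) sq2: "x \<in> carrier G \<Longrightarrow> x [^] (2::nat) = x \<otimes> x"
  by (simp add: numeral_2_eq_2)

lemma (in group) four_distinct:
  assumes z: "z \<in> carrier G" "z \<noteq> \<one>" "z \<otimes> z = \<one>"
    and x: "x \<in> carrier G" "x \<noteq> \<one>" "x \<noteq> z"
  shows "card {\<one>, z, x, z \<otimes> x} = 4"
proof -
  have iz: "inv z = z" using z by (simp add: inv_equality)
  have "z \<otimes> x \<noteq> \<one>"
  proof
    assume "z \<otimes> x = \<one>"
    then have "x = inv z" using z x by (metis inv_equality l_inv_ex m_assoc r_one l_one r_inv)
    then show False using iz x by simp
  qed
  moreover have "z \<otimes> x \<noteq> z" using z x by (metis r_one l_cancel one_closed)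
  moreover have "z \<otimes> x \<noteq> x" using z x by (metis l_one r_cancel one_closed)
  ultimately show ?thesis using z x by auto
qed

lemma (in group) four_eq:
  assumes A: "elementary_abelian_subgroup A G" "card A = 4" "\<one> \<in> A" "z \<in> A" "z \<noteq> \<one>"
    and x: "x \<in> A" "x \<noteq> \<one>" "x \<noteq> z"
  shows "A = {\<one>, z, x, z \<otimes> x}"
proof -
  have sg: "subgroup A G" using A by (simp add: elementary_abelian_subgroup_def)
  have Ac: "A \<subseteq> carrier G" using subgroup.subset[OF sg] .
  have zz: "z \<otimes> z = \<one>" using A sq2 Ac by (auto simp: elementary_abelian_subgroup_def subset_iff)
  have fin: "finite A" using A by (metis card.infinite zero_neq_numeral)
  have sub: "{\<one>, z, x, z \<otimes> x} \<subseteq> A" using A x subgroup.m_closed[OF sg] by auto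
  have "card {\<one>, z, x, z \<otimes> x} = 4" using four_distinct[of z x] A x zz Ac by auto
  then show ?thesis using card_subset_eq[OF fin sub] A by simp
qed

lemma (in group) four_eas:
  assumes z: "z \<in> carrier G" "z \<noteq> \<one>" "z \<otimes> z = \<one>"
    and x: "x \<in> carrier G" "x \<otimes> x = \<one>" "x \<otimes> z = z \<otimes> x"
  shows "elementary_abelian_subgroup {\<one>, z, x, z \<otimes> x} G"
proof -
  have zxzx: "(z \<otimes> x) \<otimes> (z \<otimes> x) = \<one>"
    by (metis m_assoc x z m_closed r_one)
  have c1: "z \<otimes> (z \<otimes> x) = x" using z x by (simp add: m_assoc[symmetric])
  have c2: "x \<otimes> (z \<otimes> x) = z" using z x by (metis m_assoc m_closed r_one)
  have c3: "(z \<otimes> x) \<otimes> z = x" using z x by (metis m_assoc l_one)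
  have c4: "(z \<otimes> x) \<otimes> x = z" using z x by (metis m_assoc r_one)
  have ic: "inv a = a" if "a \<in> carrier G" "a \<otimes> a = \<one>" for a using that by (simp add: inv_equality)
  show ?thesis unfolding elementary_abelian_subgroup_def
  proof (intro conjI)
    show "subgroup {\<one>, z, x, z \<otimes> x} G"
    proof
      show "{\<one>, z, x, z \<otimes> x} \<subseteq> carrier G" using z x by auto
      show "\<one> \<in> {\<one>, z, x, z \<otimes> x}" by simp
      fix a b assume "a \<in> {\<one>, z, x, z \<otimes> x}" "b \<in> {\<one>, z, x, z \<otimes> x}"
      then show "a \<otimes> b \<in> {\<one>, z, x, z \<otimes> x}" using z x zxzx c1 c2 c3 c4 by auto
    next
      fix a assume "a \<in> {\<one>, z, x, z \<otimes> x}"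
      then show "inv a \<in> {\<one>, z, x, z \<otimes> x}" using z x zxzx ic by auto
    qed
    show "\<forall>a\<in>{\<one>, z, x, z \<otimes> x}. \<forall>b\<in>{\<one>, z, x, z \<otimes> x}. a \<otimes> b = b \<otimes> a"
      using z x zxzx c1 c2 c3 c4 by auto
    show "\<forall>a\<in>{\<one>, z, x, z \<otimes> x}. a [^] (2::nat) = \<one>" using z x zxzx by (auto simp: sq2)
  qed
qed


lemma (in group) count_upper:
  assumes fin: "finite (carrier G)" and z: "z \<in> carrier G" "z \<noteq> \<one>"
    and ne: "{A. elementary_abelian_subgroup A G \<and> card A = 4 \<and> {\<one>, z} \<subseteq> A} \<noteq> {}"
  shows "2 * card {A. elementary_abelian_subgroup A G \<and> card A = 4 \<and> {\<one>, z} \<subseteq> A} + 2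
          \<le> card {x \<in> carrier G. x \<otimes> x = \<one>}"
proof -
  define F where "F = {A. elementary_abelian_subgroup A G \<and> card A = 4 \<and> {\<one>, z} \<subseteq> A}"
  define S where "S = {x \<in> carrier G. x \<otimes> x = \<one>}"
  define Z where "Z = {\<one>, z}"
  have Asub: "A \<subseteq> carrier G" if "A \<in> F" for A
    using that subgroup.subset by (auto simp: F_def elementary_abelian_subgroup_def)
  have AS: "A \<subseteq> S" if "A \<in> F" for A
    using that Asub[OF that] sq2 by (auto simp: F_def S_def elementary_abelian_subgroup_def subset_iff)
  obtain A0 where "A0 \<in> F" using ne F_def by auto
  then have ZS: "Z \<subseteq> S" using AS by (auto simp: F_def Z_def)
  have finF: "finite F"
    by (rule finite_subset[of F "Pow (carrier G)"]) (use Asub fin in auto)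
  have finA: "finite A" if "A \<in> F" for A using Asub[OF that] fin finite_subset by blast
  have cardZ: "card Z = 2" using z by (simp add: Z_def)
  have cA: "card (A - Z) = 2" if "A \<in> F" for A
    using that finA[OF that] cardZ by (simp add: F_def Z_def card_Diff_subset)
  have disj: "(A - Z) \<inter> (B - Z) = {}" if "A \<in> F" "B \<in> F" "A \<noteq> B" for A B
  proof (rule ccontr)
    assume "(A - Z) \<inter> (B - Z) \<noteq> {}"
    then obtain x where x: "x \<in> A" "x \<in> B" "x \<notin> Z" by auto
    have "A = {\<one>, z, x, z \<otimes> x}" using four_eq[of A z x] that x z by (auto simp: F_def Z_def)
    moreover have "B = {\<one>, z, x, z \<otimes> x}" using four_eq[of B z x] that x z by (auto simp: F_def Z_def)
    ultimately show False using that by simp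
  qed
  have "card (\<Union>A\<in>F. A - Z) = (\<Sum>A\<in>F. card (A - Z))"
    by (rule card_UN_disjoint) (use finF finA disj in auto)
  also have "\<dots> = 2 * card F" using cA by simp
  finally have e1: "card (\<Union>A\<in>F. A - Z) = 2 * card F" .
  have finS: "finite S" using fin by (simp add: S_def)
  have "card (\<Union>A\<in>F. A - Z) \<le> card (S - Z)"
    by (rule card_mono) (use finS AS in auto)
  also have "\<dots> = card S - 2" using card_Diff_subset[OF _ ZS] cardZ finite_subset[OF ZS finS] by simp
  finally show ?thesis using e1 ZS cardZ card_mono[OF finS ZS] unfolding F_def S_def by linarith
qed


lemma (in group) count_lower:
  assumes fin: "finite (carrier G)" and z: "z \<in> carrier G" "z \<noteq> \<one>" "z \<otimes> z = \<one>"
    and zc: "\<And>x. x \<in> carrier G \<Longrightarrow> x \<otimes> z = z \<otimes> x"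
    and fr: "frattini G \<subseteq> {\<one>, z}"
  shows "card {x \<in> carrier G. x \<otimes> x = \<one>} \<le> 2 * e_num 2 G + 2"
proof -
  define F where "F = {A. elementary_abelian_subgroup A G \<and> card A = 2^2 \<and> frattini G \<subseteq> A}"
  define S where "S = {x \<in> carrier G. x \<otimes> x = \<one>}"
  define Z where "Z = {\<one>, z}"
  define f where "f = (\<lambda>x. {\<one>, z, x, z \<otimes> x})"
  have Asub: "A \<subseteq> carrier G" if "A \<in> F" for A
    using that subgroup.subset by (auto simp: F_def elementary_abelian_subgroup_def)
  have finF: "finite F"
    by (rule finite_subset[of F "Pow (carrier G)"]) (use Asub fin in auto)
  have finS: "finite S" using fin by (simp add: S_def)
  have ZS: "Z \<subseteq> S" using z by (auto simp: Z_def S_def)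
  have imF: "f ` (S - Z) \<subseteq> F"
  proof
    fix A assume "A \<in> f ` (S - Z)"
    then obtain x where x: "x \<in> S" "x \<notin> Z" "A = f x" by auto
    have xc: "x \<in> carrier G" "x \<otimes> x = \<one>" using x by (auto simp: S_def)
    have "elementary_abelian_subgroup A G" unfolding x(3) f_def by (rule four_eas) (use xc z zc[OF xc(1)] in auto)
    moreover have "card A = 4" unfolding x(3) f_def by (rule four_distinct) (use xc z x in \<open>auto simp: Z_def\<close>)
    moreover have "frattini G \<subseteq> A" using fr x by (auto simp: f_def)
    ultimately show "A \<in> F" by (simp add: F_def)
  qed
  have subU: "S - Z \<subseteq> (\<Union>A\<in>f ` (S - Z). A - Z)"
  proof
    fix x assume x: "x \<in> S - Z"
    then have "x \<in> f x - Z" by (simp add: f_def)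
    then show "x \<in> (\<Union>A\<in>f ` (S - Z). A - Z)" using x by blast
  qed
  have finU: "finite (\<Union>A\<in>f ` (S - Z). A - Z)"
    by (rule finite_UN_I) (use finS in \<open>auto simp: f_def\<close>)
  have "card (S - Z) \<le> card (\<Union>A\<in>f ` (S - Z). A - Z)" 
    by (rule card_mono[OF finU subU])
  also have "\<dots> \<le> (\<Sum>A\<in>f ` (S - Z). card (A - Z))"
    by (rule card_UN_le) (use finS in auto)
  also have "\<dots> \<le> (\<Sum>A\<in>f ` (S - Z). 2)"
  proof (rule sum_mono)
    fix A assume "A \<in> f ` (S - Z)"
    then obtain x where "A = f x" by auto
    then have "A - Z \<subseteq> {x, z \<otimes> x}" by (auto simp: f_def Z_def)
    then have "card (A - Z) \<le> card {x, z \<otimes> x}" by (intro card_mono) auto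
    also have "\<dots> \<le> 2" by (simp add: card_insert_if)
    finally show "card (A - Z) \<le> 2" .
  qed
  also have "\<dots> = 2 * card (f ` (S - Z))" by simp
  also have "\<dots> \<le> 2 * card F" using card_mono[OF finF imF] by simp
  finally have "card (S - Z) \<le> 2 * card F" .
  moreover have "card (S - Z) = card S - 2"
    using card_Diff_subset[OF _ ZS] finite_subset[OF ZS finS] z by (simp add: Z_def)
  ultimately show ?thesis unfolding F_def S_def e_num_def by linarith
qed



lemma int4: "{0..<4::int} = {0,1,2,3}" by auto

lemma D8_carrier: "carrier D8 = {0,1,2,3} \<times> UNIV"
  by (simp add: D8_def int4)

lemma D8_mult: "(a, b) \<otimes>\<^bsub>D8\<^esub> (c, d) = ((a + (if b then - c else c)) mod 4, b \<noteq> d)"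
  by (simp add: D8_def)

lemma D8_one: "\<one>\<^bsub>D8\<^esub> = (0, False)"
  by (simp add: D8_def)

lemma D8_assoc_aux:
  fixes a c e :: int
  shows "((a + (if b then - c else c)) mod 4 + (if b \<noteq> d then - e else e)) mod 4 =
         (a + (if b then - ((c + (if d then - e else e)) mod 4) else (c + (if d then - e else e)) mod 4)) mod 4"
  by (cases b; cases d) (simp_all add: mod_simps diff_conv_add_uminus[symmetric] algebra_simps)

lemma D8_group: "group D8"
proof (rule groupI)
  fix x y assume "x \<in> carrier D8" "y \<in> carrier D8"
  then show "x \<otimes>\<^bsub>D8\<^esub> y \<in> carrier D8"
    by (cases x; cases y) (simp add: D8_def)
next
  show "\<one>\<^bsub>D8\<^esub> \<in> carrier D8" by (simp add: D8_def)
next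
  fix x y z assume "x \<in> carrier D8" "y \<in> carrier D8" "z \<in> carrier D8"
  obtain a b where "x = (a, b)" by (cases x)
  moreover obtain c d where "y = (c, d)" by (cases y)
  moreover obtain e f where "z = (e, f)" by (cases z)
  ultimately show "x \<otimes>\<^bsub>D8\<^esub> y \<otimes>\<^bsub>D8\<^esub> z = x \<otimes>\<^bsub>D8\<^esub> (y \<otimes>\<^bsub>D8\<^esub> z)"
    apply (simp only: D8_mult prod.inject)
    apply (rule conjI)
     apply (rule D8_assoc_aux)
    by blast
next
  fix x assume "x \<in> carrier D8"
  then show "\<one>\<^bsub>D8\<^esub> \<otimes>\<^bsub>D8\<^esub> x = x"
    by (cases x) (auto simp: D8_def)
next
  fix x assume x: "x \<in> carrier D8"
  obtain a b where ab: "x = (a, b)" by (cases x)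
  show "\<exists>y\<in>carrier D8. y \<otimes>\<^bsub>D8\<^esub> x = \<one>\<^bsub>D8\<^esub>"
  proof (cases b)
    case True
    then show ?thesis using x ab by (intro bexI[of _ x]) (auto simp: D8_def)
  next
    case False
    then show ?thesis using x ab by (intro bexI[of _ "((- a) mod 4, False)"]) (auto simp: D8_def mod_simps)
  qed
qed

lemma C2pow_group: "group (C2pow m)"
  unfolding C2pow_def by (rule product_group) simp

lemma P_group: "group (D8 \<times>\<times> C2pow m)"
  by (rule DirProd_group[OF D8_group C2pow_group])

lemma C2pow_carrier: "carrier (C2pow m) = (\<Pi>\<^sub>E i\<in>{..<m}. {0..<2})"
  by (simp add: C2pow_def carrier_integer_mod_group)

lemma C2pow_one: "\<one>\<^bsub>C2pow m\<^esub> = (\<lambda>i\<in>{..<m}. 0)"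
  by (simp add: C2pow_def)

lemma C2pow_mult: "f \<otimes>\<^bsub>C2pow m\<^esub> g = (\<lambda>i\<in>{..<m}. (f i + g i) mod 2)"
  by (simp add: C2pow_def)

lemma C2pow_sq: "f \<in> carrier (C2pow m) \<Longrightarrow> f \<otimes>\<^bsub>C2pow m\<^esub> f = \<one>\<^bsub>C2pow m\<^esub>"
  unfolding C2pow_mult C2pow_one by (rule restrict_ext) (auto simp: C2pow_carrier)

lemma C2pow_card: "card (carrier (C2pow m)) = 2 ^ m"
  by (simp add: C2pow_carrier card_PiE)

lemma (in group) index2_maximal:
  assumes hom: "\<And>x y. x \<in> carrier G \<Longrightarrow> y \<in> carrier G \<Longrightarrow> \<phi> (x \<otimes> y) = (\<phi> x \<noteq> \<phi> y)"
    and g: "g \<in> carrier G" "\<phi> g"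
  shows "maximal_subgroup {x \<in> carrier G. \<not> \<phi> x} G"
proof -
  define M where "M = {x \<in> carrier G. \<not> \<phi> x}"
  have p1: "\<not> \<phi> \<one>" using hom[of \<one> \<one>] by simp
  have pinv: "\<phi> (inv x) = \<phi> x" if "x \<in> carrier G" for x
    using hom[of "inv x" x] that p1 by auto
  have sg: "subgroup M G"
  proof
    show "M \<subseteq> carrier G" by (auto simp: M_def)
    show "\<one> \<in> M" using p1 by (simp add: M_def)
    fix x y assume "x \<in> M" "y \<in> M"
    then show "x \<otimes> y \<in> M" using hom by (auto simp: M_def)
  next
    fix x assume "x \<in> M"
    then show "inv x \<in> M" using pinv by (auto simp: M_def)
  qed
  have ne: "M \<noteq> carrier G" using g by (auto simp: M_def)
  have mx: "K = M \<or> K = carrier G" if K: "subgroup K G" "M \<subseteq> K" for K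
  proof (cases "K \<subseteq> M")
    case True then show ?thesis using K by auto
  next
    case False
    then obtain k where k: "k \<in> K" "k \<notin> M" by auto
    have kc: "k \<in> carrier G" using k K subgroup.subset by blast
    have pk: "\<phi> k" using k kc by (simp add: M_def)
    have "carrier G \<subseteq> K"
    proof
      fix h assume h: "h \<in> carrier G"
      show "h \<in> K"
      proof (cases "\<phi> h")
        case False then show ?thesis using h K by (auto simp: M_def)
      next
        case True
        have "inv k \<otimes> h \<in> M" using hom[of "inv k" h] pinv[OF kc] pk True h kc by (simp add: M_def)
        then have "inv k \<otimes> h \<in> K" using K(2) by blast
        then have "k \<otimes> (inv k \<otimes> h) \<in> K" by (rule subgroup.m_closed[OF K(1) k(1)])
        then show ?thesis using kc h by (simp add: m_assoc[symmetric])
      qed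
    qed
    then show ?thesis using K subgroup.subset by blast
  qed
  show ?thesis unfolding maximal_subgroup_def M_def[symmetric] using sg ne mx by blast
qed

lemma C2pow_val: "f \<in> carrier (C2pow m) \<Longrightarrow> i < m \<Longrightarrow> f i = 0 \<or> f i = 1"
proof -
  assume "f \<in> carrier (C2pow m)" "i < m"
  then have "f i \<in> {0..<2}" unfolding C2pow_carrier by blast
  then show ?thesis by auto
qed

lemma odd_mod4: "even ((k::int) mod 4) \<longleftrightarrow> even k"
  by (simp add: even_iff_mod_2_eq_zero mod_mod_cancel)

lemma frattini_P:
  "frattini (D8 \<times>\<times> C2pow m) \<subseteq> {((0, False), \<one>\<^bsub>C2pow m\<^esub>), ((2, False), \<one>\<^bsub>C2pow m\<^esub>)}"
proof
  let ?P = "D8 \<times>\<times> C2pow m"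
  interpret P: group ?P by (rule P_group)
  fix y assume y: "y \<in> frattini ?P"
  then have yc: "y \<in> carrier ?P" and yM: "\<And>M. maximal_subgroup M ?P \<Longrightarrow> y \<in> M"
    by (auto simp: frattini_def)
  obtain a b f where yabf: "y = ((a, b), f)" by (metis prod.collapse)
  have ab: "(a, b) \<in> carrier D8" and fc: "f \<in> carrier (C2pow m)" using yc yabf by auto
  have one_c: "\<one>\<^bsub>C2pow m\<^esub> \<in> carrier (C2pow m)" using group.is_monoid[OF C2pow_group] by (simp add: monoid.one_closed)
  have "maximal_subgroup {x \<in> carrier ?P. \<not> snd (fst x)} ?P"
  proof (rule P.index2_maximal)
    fix x y assume "x \<in> carrier ?P" "y \<in> carrier ?P"
    then show "snd (fst (x \<otimes>\<^bsub>?P\<^esub> y)) = (snd (fst x) \<noteq> snd (fst y))"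
      by (cases x; cases y) (auto simp: D8_def)
  next
    show "((0, True), \<one>\<^bsub>C2pow m\<^esub>) \<in> carrier ?P" using one_c by (simp add: D8_def)
  qed simp
  then have nb: "\<not> b" using yM yabf by fastforce
  have "maximal_subgroup {x \<in> carrier ?P. \<not> odd (fst (fst x))} ?P"
  proof (rule P.index2_maximal)
    fix x y assume "x \<in> carrier ?P" "y \<in> carrier ?P"
    then show "odd (fst (fst (x \<otimes>\<^bsub>?P\<^esub> y))) = (odd (fst (fst x)) \<noteq> odd (fst (fst y)))"
      by (cases x; cases y) (auto simp: D8_def odd_mod4 split: if_splits)
  next
    show "((1, False), \<one>\<^bsub>C2pow m\<^esub>) \<in> carrier ?P" using one_c by (simp add: D8_def)
  qed simp
  then have ea: "even a" using yM yabf by fastforce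
  have fi: "f i = 0" if i: "i < m" for i
  proof -
    have "maximal_subgroup {x \<in> carrier ?P. \<not> (snd x i = 1)} ?P"
    proof (rule P.index2_maximal)
      fix x y assume "x \<in> carrier ?P" "y \<in> carrier ?P"
      then have "snd x \<in> carrier (C2pow m)" "snd y \<in> carrier (C2pow m)" by auto
      then have "snd x i = 0 \<or> snd x i = 1" "snd y i = 0 \<or> snd y i = 1" using i C2pow_val by blast+
      then show "(snd (x \<otimes>\<^bsub>?P\<^esub> y) i = 1) = ((snd x i = 1) \<noteq> (snd y i = 1))"
        using i by (cases x; cases y) (auto simp: C2pow_mult)
    next
      show "((0, False), \<one>\<^bsub>C2pow m\<^esub>(i := 1)) \<in> carrier ?P"
        using i by (auto simp: D8_def C2pow_carrier C2pow_one PiE_iff extensional_def)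
    next
      show "snd ((0::int, False), \<one>\<^bsub>C2pow m\<^esub>(i := 1)) i = 1" by simp
    qed
    then have "f i \<noteq> 1" using yM yabf by fastforce
    moreover have "f i = 0 \<or> f i = 1" using fc i C2pow_val by blast
    ultimately show ?thesis by auto
  qed
  have fone: "f = \<one>\<^bsub>C2pow m\<^esub>"
  proof
    fix i show "f i = \<one>\<^bsub>C2pow m\<^esub> i"
    proof (cases "i < m")
      case True then show ?thesis using fi[OF True] by (simp add: C2pow_one)
    next
      case False
      have "f \<in> (\<Pi>\<^sub>E i\<in>{..<m}. {0..<2})" using fc by (simp only: C2pow_carrier)
      then have "f i = undefined" by (rule PiE_arb) (use False in simp)
      then show ?thesis using False by (simp add: C2pow_one)
    qed
  qed
  have "a = 0 \<or> a = 2" using ab ea by (auto simp: D8_carrier)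
  then show "y \<in> {((0, False), \<one>\<^bsub>C2pow m\<^esub>), ((2, False), \<one>\<^bsub>C2pow m\<^esub>)}"
    using yabf nb fone by auto
qed



lemma D8_S: "{d \<in> carrier D8. d \<otimes>\<^bsub>D8\<^esub> d = \<one>\<^bsub>D8\<^esub>} = {(0,False),(2,False),(0,True),(1,True),(2,True),(3,True)}"
  by (auto simp: D8_carrier D8_mult D8_one)

lemma S_P_card: "card {x \<in> carrier (D8 \<times>\<times> C2pow m). x \<otimes>\<^bsub>D8 \<times>\<times> C2pow m\<^esub> x = \<one>\<^bsub>D8 \<times>\<times> C2pow m\<^esub>} = 6 * 2 ^ m"
proof -
  have "{x \<in> carrier (D8 \<times>\<times> C2pow m). x \<otimes>\<^bsub>D8 \<times>\<times> C2pow m\<^esub> x = \<one>\<^bsub>D8 \<times>\<times> C2pow m\<^esub>}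
      = {d \<in> carrier D8. d \<otimes>\<^bsub>D8\<^esub> d = \<one>\<^bsub>D8\<^esub>} \<times> carrier (C2pow m)"
    by (auto simp: C2pow_sq)
  also have "card \<dots> = 6 * 2 ^ m" unfolding D8_S card_cartesian_product C2pow_card by simp
  finally show ?thesis .
qed

lemma z_facts:
  fixes m :: nat
  defines "z \<equiv> ((2::int, False), \<one>\<^bsub>C2pow m\<^esub>)"
  shows "z \<in> carrier (D8 \<times>\<times> C2pow m)" "z \<noteq> \<one>\<^bsub>D8 \<times>\<times> C2pow m\<^esub>"
    "z \<otimes>\<^bsub>D8 \<times>\<times> C2pow m\<^esub> z = \<one>\<^bsub>D8 \<times>\<times> C2pow m\<^esub>"
    "\<And>x. x \<in> carrier (D8 \<times>\<times> C2pow m) \<Longrightarrow> x \<otimes>\<^bsub>D8 \<times>\<times> C2pow m\<^esub> z = z \<otimes>\<^bsub>D8 \<times>\<times> C2pow m\<^esub> x"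
proof -
  interpret C: group "C2pow m" by (rule C2pow_group)
  show "z \<in> carrier (D8 \<times>\<times> C2pow m)" by (simp add: z_def D8_carrier)
  show "z \<noteq> \<one>\<^bsub>D8 \<times>\<times> C2pow m\<^esub>" by (simp add: z_def D8_one)
  show "z \<otimes>\<^bsub>D8 \<times>\<times> C2pow m\<^esub> z = \<one>\<^bsub>D8 \<times>\<times> C2pow m\<^esub>" by (simp add: z_def D8_one D8_mult)
  fix x assume x: "x \<in> carrier (D8 \<times>\<times> C2pow m)"
  obtain a b f where xabf: "x = ((a, b), f)" by (metis prod.collapse)
  have fc: "f \<in> carrier (C2pow m)" using x xabf by auto
  have "(a + (if b then - 2 else 2)) mod 4 = (2 + a) mod 4"
  proof (cases b)
    case True
    have e: "2 + a = (a - 2) + 4" by simp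
    have "(2 + a) mod 4 = (a - 2) mod 4" unfolding e by (rule mod_add_self2)
    then show ?thesis using True by simp
  qed (simp add: algebra_simps)
  then show "x \<otimes>\<^bsub>D8 \<times>\<times> C2pow m\<^esub> z = z \<otimes>\<^bsub>D8 \<times>\<times> C2pow m\<^esub> x"
    using fc by (simp add: z_def xabf D8_mult)
qed

lemma P_lower:
  "6 * 2 ^ m \<le> 2 * e_num 2 (D8 \<times>\<times> C2pow m) + 2"
proof -
  interpret P: group "D8 \<times>\<times> C2pow m" by (rule P_group)
  have fin: "finite (carrier (D8 \<times>\<times> C2pow m))"
  proof -
    have "finite (carrier D8)" by (simp add: D8_carrier)
    moreover have "finite (carrier (C2pow m))" using C2pow_card[of m] card.infinite by fastforce
    ultimately show ?thesis by simp
  qed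
  have "card {x \<in> carrier (D8 \<times>\<times> C2pow m). x \<otimes>\<^bsub>D8 \<times>\<times> C2pow m\<^esub> x = \<one>\<^bsub>D8 \<times>\<times> C2pow m\<^esub>}
      \<le> 2 * e_num 2 (D8 \<times>\<times> C2pow m) + 2"
  proof (rule P.count_lower[OF fin z_facts(1-3) z_facts(4)])
    have o: "\<one>\<^bsub>D8 \<times>\<times> C2pow m\<^esub> = ((0, False), \<one>\<^bsub>C2pow m\<^esub>)" by (simp add: D8_one)
    show "frattini (D8 \<times>\<times> C2pow m) \<subseteq> {\<one>\<^bsub>D8 \<times>\<times> C2pow m\<^esub>, ((2, False), \<one>\<^bsub>C2pow m\<^esub>)}"
      unfolding o by (rule frattini_P)
  qed
  then show ?thesis using S_P_card[of m] by simp
qed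

lemma G_upper:
  fixes G :: "('a, 'b) monoid_scheme"
  assumes grp: "group G" and fin: "finite (carrier G)"
    and der: "derived G (carrier G) = frattini G" and c2: "card (frattini G) = 2"
  shows "2 * e_num 2 G + 2 \<le> card {x \<in> carrier G. x \<otimes>\<^bsub>G\<^esub> x = \<one>\<^bsub>G\<^esub>} \<or> e_num 2 G = 0"
    and "4 * card {x \<in> carrier G. x \<otimes>\<^bsub>G\<^esub> x = \<one>\<^bsub>G\<^esub>} \<le> 3 * order G"
proof -
  interpret G: group G by (rule grp)
  have one_fr: "\<one>\<^bsub>G\<^esub> \<in> frattini G"
    by (auto simp: frattini_def maximal_subgroup_def subgroup.one_closed)
  obtain u v where uv: "frattini G = {u, v}" "u \<noteq> v" using c2 card_2_iff by metis
  obtain z where z: "frattini G = {\<one>\<^bsub>G\<^esub>, z}" "z \<noteq> \<one>\<^bsub>G\<^esub>"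
    using uv one_fr by auto
  have zc: "z \<in> carrier G" using z by (auto simp: frattini_def)
  have nc: "\<not> (\<forall>x\<in>carrier G. \<forall>y\<in>carrier G. x \<otimes>\<^bsub>G\<^esub> y = y \<otimes>\<^bsub>G\<^esub> x)"
  proof
    assume comm: "\<forall>x\<in>carrier G. \<forall>y\<in>carrier G. x \<otimes>\<^bsub>G\<^esub> y = y \<otimes>\<^bsub>G\<^esub> x"
    have "derived_set G (carrier G) \<subseteq> {\<one>\<^bsub>G\<^esub>}"
    proof clarify
      fix h1 h2 assume h: "h1 \<in> carrier G" "h2 \<in> carrier G"
      have "h1 \<otimes>\<^bsub>G\<^esub> h2 \<otimes>\<^bsub>G\<^esub> inv\<^bsub>G\<^esub> h1 \<otimes>\<^bsub>G\<^esub> inv\<^bsub>G\<^esub> h2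
          = (h1 \<otimes>\<^bsub>G\<^esub> h2) \<otimes>\<^bsub>G\<^esub> inv\<^bsub>G\<^esub> (h2 \<otimes>\<^bsub>G\<^esub> h1)"
        using h by (simp add: G.m_assoc G.inv_mult_group)
      also have "\<dots> = \<one>\<^bsub>G\<^esub>" using h comm by simp
      finally show "h1 \<otimes>\<^bsub>G\<^esub> h2 \<otimes>\<^bsub>G\<^esub> inv\<^bsub>G\<^esub> h1 \<otimes>\<^bsub>G\<^esub> inv\<^bsub>G\<^esub> h2 = \<one>\<^bsub>G\<^esub>" .
    qed
    then have "derived G (carrier G) \<subseteq> {\<one>\<^bsub>G\<^esub>}"
      unfolding derived_def using G.mono_generate[OF \<open>derived_set G (carrier G) \<subseteq> {\<one>\<^bsub>G\<^esub>}\<close>] G.generate_one by simp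
    then have "card (frattini G) \<le> 1" using der card_mono[of "{\<one>\<^bsub>G\<^esub>}" "frattini G"] by simp
    then show False using c2 by simp
  qed
  show "4 * card {x \<in> carrier G. x \<otimes>\<^bsub>G\<^esub> x = \<one>\<^bsub>G\<^esub>} \<le> 3 * order G"
    by (rule G.three_quarters[OF fin nc])
  have e: "e_num 2 G = card {A. elementary_abelian_subgroup A G \<and> card A = 4 \<and> {\<one>\<^bsub>G\<^esub>, z} \<subseteq> A}"
    unfolding e_num_def z(1) by simp
  show "2 * e_num 2 G + 2 \<le> card {x \<in> carrier G. x \<otimes>\<^bsub>G\<^esub> x = \<one>\<^bsub>G\<^esub>} \<or> e_num 2 G = 0"
  proof (cases "{A. elementary_abelian_subgroup A G \<and> card A = 4 \<and> {\<one>\<^bsub>G\<^esub>, z} \<subseteq> A} = {}")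
    case True
    have "e_num 2 G = 0" unfolding e True by simp
    then show ?thesis by simp
  next
    case False then show ?thesis using G.count_upper[OF fin zc z(2) False] e by simp
  qed
qed

theorem lemma2p6:
  fixes G :: "('a, 'b) monoid_scheme" and n :: nat
  assumes "group G" and "finite (carrier G)" and "order G = 2 ^ n" and "n \<ge> 3"
    and "extraspecial G \<or> almost_extraspecial G"
  shows "e_num 2 G \<le> e_num 2 (D8 \<times>\<times> C2pow (n - 3))"
proof -
  have der: "derived G (carrier G) = frattini G" and c2: "card (frattini G) = 2"
    using assms(5) by (auto simp: extraspecial_def almost_extraspecial_def)
  note U = G_upper[OF assms(1,2) der c2]
  have L: "6 * 2 ^ (n - 3) \<le> 2 * e_num 2 (D8 \<times>\<times> C2pow (n - 3)) + 2" by (rule P_lower)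
  have n: "(2::nat) ^ n = 8 * 2 ^ (n - 3)"
  proof -
    have "n = (n - 3) + 3" using assms(4) by simp
    then have "(2::nat) ^ n = 2 ^ (n - 3) * 2 ^ 3" by (metis power_add)
    then show ?thesis by simp
  qed
  have "4 * card {x \<in> carrier G. x \<otimes>\<^bsub>G\<^esub> x = \<one>\<^bsub>G\<^esub>} \<le> 24 * 2 ^ (n - 3)"
    using U(2) assms(3) n by simp
  then have "card {x \<in> carrier G. x \<otimes>\<^bsub>G\<^esub> x = \<one>\<^bsub>G\<^esub>} \<le> 6 * 2 ^ (n - 3)" by simp
  then show ?thesis using U(1) L by linarith
qed

end
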